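(* Consider a shallow ReLU network without biases with widths $n_0,n_1,n_2$ and activation patterns $A_1,\dots,A_k\in\{0,1\}^{n_1}$. For every $\lambda\in\mathbb{Z}^k$, the ideal $J^{\mathbf{A}}$ contains all $\big(|\operatorname{supp}(\sum_{i\in[k]}\lambda_iA_i)|+1\big)$-minors of the matrix $\sum_{i\in[k]}\lambda_iM_i$.
   Context: Parameters are $W^{(1)}\in\mathbb{R}^{n_1\times n_0}$, $W^{(2)}\in\mathbb{R}^{n_2\times n_1}$, and $M_A(\theta)=W^{(2)}\operatorname{diag}(A)W^{(1)}$. $J^{\mathbf{A}}\subseteq\mathbb{C}[m^{(i)}_{jl}: i\in[k], j\in[n_2], l\in[n_0]]$ is the ideal of all polynomials vanishing on the Zariski closure in $(\mathbb{C}^{n_2\times n_0})^k$ of $\{(M_{A_1}(\theta),\dots,M_{A_k}(\theta)):\theta\}$, where $M_i=(m^{(i)}_{jl})$ are coordinate matrices. $\operatorname{supp}(v)$ is the set of nonzero coordinates of $v\in\mathbb{Z}^{n_1}$. *)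

theory Defs
  imports Complex_Main "HOL-Library.Poly_Mapping" "HOL-Combinatorics.Permutations"
begin

text \<open>Variables m^(i)_{jl} are indexed by triples (i,j,l) (0-based: i<k, j<n2, l<n0).\<close>

type_synonym var = "nat \<times> nat \<times> nat"
type_synonym mpoly = "(var \<Rightarrow>\<^sub>0 nat) \<Rightarrow>\<^sub>0 complex"

definition mvar :: "var \<Rightarrow> mpoly" where
  "mvar v = Poly_Mapping.single (Poly_Mapping.single v 1) 1"

definition mpoly_vars :: "mpoly \<Rightarrow> var set" where
  "mpoly_vars p = (\<Union>m\<in>Poly_Mapping.keys p. Poly_Mapping.keys (m :: var \<Rightarrow>\<^sub>0 nat))"

definition mpoly_eval :: "mpoly \<Rightarrow> (var \<Rightarrow> complex) \<Rightarrow> complex" where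
  "mpoly_eval p x = (\<Sum>m\<in>Poly_Mapping.keys p. Poly_Mapping.lookup p m * (\<Prod>v\<in>Poly_Mapping.keys (m :: var \<Rightarrow>\<^sub>0 nat). x v ^ Poly_Mapping.lookup m v))"

definition coord_set :: "nat \<Rightarrow> nat \<Rightarrow> nat \<Rightarrow> var set" where
  "coord_set k n2 n0 = {(i,j,l). i < k \<and> j < n2 \<and> l < n0}"

text \<open>Points of the ambient space (C^{n2 x n0})^k: functions vanishing off the coordinate set.\<close>
definition ambient :: "nat \<Rightarrow> nat \<Rightarrow> nat \<Rightarrow> (var \<Rightarrow> complex) set" where
  "ambient k n2 n0 = {x. \<forall>v. v \<notin> coord_set k n2 n0 \<longrightarrow> x v = 0}"

definition poly_ring :: "nat \<Rightarrow> nat \<Rightarrow> nat \<Rightarrow> mpoly set" where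
  "poly_ring k n2 n0 = {p. mpoly_vars p \<subseteq> coord_set k n2 n0}"

definition zariski_closure :: "nat \<Rightarrow> nat \<Rightarrow> nat \<Rightarrow> (var \<Rightarrow> complex) set \<Rightarrow> (var \<Rightarrow> complex) set" where
  "zariski_closure k n2 n0 S = {x \<in> ambient k n2 n0.
      \<forall>p \<in> poly_ring k n2 n0. (\<forall>y\<in>S. mpoly_eval p y = 0) \<longrightarrow> mpoly_eval p x = 0}"

definition vanishing_ideal :: "nat \<Rightarrow> nat \<Rightarrow> nat \<Rightarrow> (var \<Rightarrow> complex) set \<Rightarrow> mpoly set" where
  "vanishing_ideal k n2 n0 V = {p \<in> poly_ring k n2 n0. \<forall>x\<in>V. mpoly_eval p x = 0}"

text \<open>M_A(theta) = W2 diag(A) W1 with W1 (n1 x n0), W2 (n2 x n1) real; A a 0/1 vector given as a predicate.\<close>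
definition net_matrix :: "nat \<Rightarrow> (nat \<Rightarrow> nat \<Rightarrow> real) \<Rightarrow> (nat \<Rightarrow> nat \<Rightarrow> real) \<Rightarrow> (nat \<Rightarrow> bool)
    \<Rightarrow> nat \<Rightarrow> nat \<Rightarrow> real" where
  "net_matrix n1 W1 W2 A j l = (\<Sum>r<n1. W2 j r * of_bool (A r) * W1 r l)"

definition param_point :: "nat \<Rightarrow> nat \<Rightarrow> nat \<Rightarrow> nat \<Rightarrow> (nat \<Rightarrow> nat \<Rightarrow> bool)
    \<Rightarrow> (nat \<Rightarrow> nat \<Rightarrow> real) \<Rightarrow> (nat \<Rightarrow> nat \<Rightarrow> real) \<Rightarrow> var \<Rightarrow> complex" where
  "param_point k n0 n1 n2 A W1 W2 = (\<lambda>(i,j,l).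
      if i < k \<and> j < n2 \<and> l < n0 then complex_of_real (net_matrix n1 W1 W2 (A i) j l) else 0)"

definition J_ideal :: "nat \<Rightarrow> nat \<Rightarrow> nat \<Rightarrow> nat \<Rightarrow> (nat \<Rightarrow> nat \<Rightarrow> bool) \<Rightarrow> mpoly set" where
  "J_ideal k n0 n1 n2 A = vanishing_ideal k n2 n0
     (zariski_closure k n2 n0 {param_point k n0 n1 n2 A W1 W2 | W1 W2. True})"

definition det_n :: "nat \<Rightarrow> (nat \<Rightarrow> nat \<Rightarrow> 'a::comm_ring_1) \<Rightarrow> 'a" where
  "det_n t B = (\<Sum>p | p permutes {..<t}. of_int (sign p) * (\<Prod>a<t. B a (p a)))"

definition minors :: "nat \<Rightarrow> nat \<Rightarrow> nat \<Rightarrow> (nat \<Rightarrow> nat \<Rightarrow> 'a::comm_ring_1) \<Rightarrow> 'a set" where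
  "minors t m n B = {det_n t (\<lambda>a b. B (rs a) (cs b)) | rs cs.
      strict_mono_on {..<t} rs \<and> strict_mono_on {..<t} cs \<and>
      (\<forall>a<t. rs a < m \<and> cs a < n)}"

definition supp_comb :: "nat \<Rightarrow> nat \<Rightarrow> (nat \<Rightarrow> int) \<Rightarrow> (nat \<Rightarrow> nat \<Rightarrow> bool) \<Rightarrow> nat set" where
  "supp_comb k n1 lam A = {r. r < n1 \<and> (\<Sum>i<k. lam i * of_bool (A i r)) \<noteq> 0}"

definition comb_matrix :: "nat \<Rightarrow> (nat \<Rightarrow> int) \<Rightarrow> nat \<Rightarrow> nat \<Rightarrow> mpoly" where
  "comb_matrix k lam j l = (\<Sum>i<k. of_int (lam i) * mvar (i, j, l))"

end

theory Submission
  imports Defs "Jordan_Normal_Form.Determinant"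
begin

lemma det_n_as_det:
  fixes N :: "nat \<Rightarrow> nat \<Rightarrow> 'a::comm_ring_1"
  shows "det_n t N = det (mat t t (\<lambda>(a,b). N a b))"
proof -
  have "det (mat t t (\<lambda>(a,b). N a b)) = (\<Sum>p\<in>{p. p permutes {0..<t}}. of_int (sign p) * (\<Prod>i = 0..<t. mat t t (\<lambda>(a,b). N a b) $$ (i, p i)))"
    by (rule det_def') simp
  also have "\<dots> = det_n t N"
    unfolding det_n_def lessThan_atLeast0
  proof (rule sum.cong[OF refl])
    fix p assume "p \<in> {p. p permutes {0..<t}}"
    then have "\<And>i. i < t \<Longrightarrow> p i < t" using permutes_in_image by fastforce
    then show "of_int (sign p) * (\<Prod>i = 0..<t. mat t t (\<lambda>(a,b). N a b) $$ (i, p i)) = of_int (sign p) * (\<Prod>a = 0..<t. N a (p a))"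
      by (auto intro!: prod.cong)
  qed
  finally show ?thesis by simp
qed

lemma det_n_factor:
  fixes N B C :: "nat \<Rightarrow> nat \<Rightarrow> 'a::comm_ring_1"
  assumes st: "s < t" and N: "\<And>a b. a<t \<Longrightarrow> b<t \<Longrightarrow> N a b = (\<Sum>q<s. B a q * C q b)"
  shows "det_n t N = 0"
proof -
  define B' where "B' = mat t t (\<lambda>(a,q). if q < s then B a q else 0)"
  define C' where "C' = mat t t (\<lambda>(q,b). if q < s then C q b else 0)"
  have Bc: "B' \<in> carrier_mat t t" and Cc: "C' \<in> carrier_mat t t" unfolding B'_def C'_def by auto
  have eq: "mat t t (\<lambda>(a,b). N a b) = B' * C'"
  proof (rule eq_matI)
    fix a b assume ab: "a < dim_row (B' * C')" "b < dim_col (B' * C')"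
    then have a: "a < t" and b: "b < t" using Bc Cc by auto
    have "(B' * C') $$ (a,b) = row B' a \<bullet> col C' b" using ab by simp
    also have "\<dots> = (\<Sum>q\<in>{0..<t}. B' $$ (a,q) * C' $$ (q,b))"
      unfolding scalar_prod_def using Bc Cc a b by (auto intro!: sum.cong)
    also have "\<dots> = (\<Sum>q\<in>{0..<t}. if q < s then B a q * C q b else 0)"
      unfolding B'_def C'_def using a b by (auto intro!: sum.cong)
    also have "\<dots> = (\<Sum>q\<in>{0..<s}. B a q * C q b)"
      by (subst sum.inter_filter[symmetric]) (use st in \<open>auto intro!: sum.cong\<close>)
    also have "\<dots> = N a b" using N[OF a b] by (simp add: lessThan_atLeast0)
    finally show "mat t t (\<lambda>(a,b). N a b) $$ (a,b) = (B' * C') $$ (a,b)" using a b by simp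
  qed (use Bc Cc in auto)
  have "det C' = 0"
  proof -
    have "det C' = (\<Sum>p\<in>{p. p permutes {0..<t}}. of_int (sign p) * (\<Prod>i = 0..<t. C' $$ (i, p i)))"
      by (rule det_def'[OF Cc])
    also have "\<dots> = 0"
    proof (rule sum.neutral, intro ballI)
      fix p assume "p \<in> {p. p permutes {0..<t}}"
      then have "p s < t" using permutes_in_image st by fastforce
      then have "(\<Prod>i = 0..<t. C' $$ (i, p i)) = 0"
        using st by (intro prod_zero) (auto simp: C'_def intro!: bexI[of _ s])
      then show "of_int (sign p) * (\<Prod>i = 0..<t. C' $$ (i, p i)) = 0" by simp
    qed
    finally show ?thesis .
  qed
  then show ?thesis unfolding det_n_as_det eq det_mult[OF Bc Cc] by simp
qed


definition mono_ev :: "(var \<Rightarrow>\<^sub>0 nat) \<Rightarrow> (var \<Rightarrow> complex) \<Rightarrow> complex" where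
  "mono_ev m x = (\<Prod>v\<in>Poly_Mapping.keys m. x v ^ Poly_Mapping.lookup m v)"

lemma mono_ev_alt: "finite K \<Longrightarrow> Poly_Mapping.keys m \<subseteq> K \<Longrightarrow>
   mono_ev m x = (\<Prod>v\<in>K. x v ^ Poly_Mapping.lookup m v)"
  unfolding mono_ev_def by (rule prod.mono_neutral_left) (auto simp: in_keys_iff)

lemma mono_ev_add: "mono_ev (a + b) x = mono_ev a x * mono_ev b x"
proof -
  let ?K = "Poly_Mapping.keys a \<union> Poly_Mapping.keys b"
  have "mono_ev (a+b) x = (\<Prod>v\<in>?K. x v ^ Poly_Mapping.lookup (a+b) v)"
    using keys_add[of a b] by (intro mono_ev_alt) auto
  also have "\<dots> = (\<Prod>v\<in>?K. x v ^ Poly_Mapping.lookup a v * x v ^ Poly_Mapping.lookup b v)"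
    by (simp add: lookup_add power_add)
  also have "\<dots> = mono_ev a x * mono_ev b x"
    by (simp add: prod.distrib mono_ev_alt[of ?K a x] mono_ev_alt[of ?K b x])
  finally show ?thesis .
qed

lemma mono_ev_zero: "mono_ev 0 x = 1" unfolding mono_ev_def by simp

lemma eval_alt: "finite K \<Longrightarrow> Poly_Mapping.keys p \<subseteq> K \<Longrightarrow>
   mpoly_eval p x = (\<Sum>m\<in>K. Poly_Mapping.lookup p m * mono_ev m x)"
  unfolding mpoly_eval_def mono_ev_def by (rule sum.mono_neutral_left) (auto simp: in_keys_iff)

lemma eval_add: "mpoly_eval (p + q) x = mpoly_eval p x + mpoly_eval q x"
proof -
  let ?K = "Poly_Mapping.keys p \<union> Poly_Mapping.keys q"
  have "mpoly_eval (p+q) x = (\<Sum>m\<in>?K. Poly_Mapping.lookup (p+q) m * mono_ev m x)"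
    using keys_add[of p q] by (intro eval_alt) auto
  also have "\<dots> = mpoly_eval p x + mpoly_eval q x"
    by (simp add: lookup_add distrib_right sum.distrib eval_alt[of ?K p x] eval_alt[of ?K q x])
  finally show ?thesis .
qed

lemma eval_zero: "mpoly_eval 0 x = 0" unfolding mpoly_eval_def by simp

lemma eval_single: "mpoly_eval (Poly_Mapping.single m c) x = c * mono_ev m x"
  unfolding mpoly_eval_def mono_ev_def by simp

lemma eval_sum: "mpoly_eval (\<Sum>i\<in>I. f i) x = (\<Sum>i\<in>I. mpoly_eval (f i) x)"
  by (induction I rule: infinite_finite_induct) (auto simp: eval_zero eval_add)

lemma eval_uminus: "mpoly_eval (- p) x = - mpoly_eval p x"
  using eval_add[of "-p" p x] by (simp add: eval_zero eq_neg_iff_add_eq_0)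

lemma poly_expand: "(p::mpoly) = (\<Sum>m\<in>Poly_Mapping.keys p. Poly_Mapping.single m (Poly_Mapping.lookup p m))"
  by (rule poly_mapping_eqI) (simp add: lookup_sum lookup_single when_def in_keys_iff)

lemma eval_mult: "mpoly_eval (p * q) x = mpoly_eval p x * mpoly_eval q x"
proof -
  have "p * q = (\<Sum>a\<in>Poly_Mapping.keys p. \<Sum>b\<in>Poly_Mapping.keys q.
      Poly_Mapping.single (a+b) (Poly_Mapping.lookup p a * Poly_Mapping.lookup q b))"
    by (subst poly_expand[of p], subst poly_expand[of q]) (simp add: sum_product mult_single)
  then have "mpoly_eval (p*q) x = (\<Sum>a\<in>Poly_Mapping.keys p. \<Sum>b\<in>Poly_Mapping.keys q.
      (Poly_Mapping.lookup p a * mono_ev a x) * (Poly_Mapping.lookup q b * mono_ev b x))"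
    by (simp add: eval_sum eval_single mono_ev_add mult_ac)
  also have "\<dots> = mpoly_eval p x * mpoly_eval q x"
    by (simp add: sum_product eval_alt[of "Poly_Mapping.keys p" p x] eval_alt[of "Poly_Mapping.keys q" q x])
  finally show ?thesis .
qed

lemma eval_one: "mpoly_eval 1 x = 1"
  using eval_single[of 0 1 x] by (simp add: mono_ev_zero)

lemma eval_prod: "mpoly_eval (\<Prod>i\<in>I. f i) x = (\<Prod>i\<in>I. mpoly_eval (f i) x)"
  by (induction I rule: infinite_finite_induct) (auto simp: eval_one eval_mult)

lemma eval_of_int: "mpoly_eval (of_int z) x = of_int z"
proof (induction z rule: int_induct[of _ 0])
  case base then show ?case by (simp add: eval_zero)
next
  case (step1 i) then show ?case by (simp add: eval_add eval_one)
next
  case (step2 i)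
  have "mpoly_eval (of_int i) x = mpoly_eval (of_int (i - 1)) x + 1"
    by (metis diff_add_cancel eval_add eval_one of_int_add of_int_1)
  then show ?case using step2 by simp
qed

lemma eval_mvar: "mpoly_eval (mvar v) x = x v"
  unfolding mvar_def eval_single mono_ev_def by simp

lemma eval_det: "mpoly_eval (det_n t B) x = det_n t (\<lambda>a b. mpoly_eval (B a b) x)"
  unfolding det_n_def by (simp add: eval_sum eval_mult eval_prod eval_of_int)

lemma vars_add: "mpoly_vars (p + q) \<subseteq> mpoly_vars p \<union> mpoly_vars q"
  unfolding mpoly_vars_def using keys_add[of p q] by auto

lemma keys_nat_add: "Poly_Mapping.keys (a + b :: var \<Rightarrow>\<^sub>0 nat) \<subseteq> Poly_Mapping.keys a \<union> Poly_Mapping.keys b"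
  by (rule keys_add)

lemma vars_mult: "mpoly_vars (p * q) \<subseteq> mpoly_vars p \<union> mpoly_vars q"
proof
  fix v assume "v \<in> mpoly_vars (p * q)"
  then obtain m where m: "m \<in> Poly_Mapping.keys (p*q)" "v \<in> Poly_Mapping.keys m"
    unfolding mpoly_vars_def by blast
  from m(1) keys_mult[of p q] obtain a b where ab: "m = a + b" "a \<in> Poly_Mapping.keys p" "b \<in> Poly_Mapping.keys q"
    by blast
  have "v \<in> Poly_Mapping.keys a \<union> Poly_Mapping.keys b" using m(2) ab(1) keys_nat_add by blast
  then show "v \<in> mpoly_vars p \<union> mpoly_vars q" using ab unfolding mpoly_vars_def by blast
qed

lemma vars_zero: "mpoly_vars 0 = {}" unfolding mpoly_vars_def by simp
lemma vars_one: "mpoly_vars 1 = {}" unfolding mpoly_vars_def by simp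

lemma vars_sum: "(\<And>i. i \<in> I \<Longrightarrow> mpoly_vars (f i) \<subseteq> S) \<Longrightarrow> mpoly_vars (\<Sum>i\<in>I. f i) \<subseteq> S"
proof (induction I rule: infinite_finite_induct)
  case (insert i F)
  have "mpoly_vars (f i + sum f F) \<subseteq> S"
    using vars_add[of "f i" "sum f F"] insert by auto
  then show ?case using insert by simp
qed (simp_all add: vars_zero)

lemma vars_prod: "(\<And>i. i \<in> I \<Longrightarrow> mpoly_vars (f i) \<subseteq> S) \<Longrightarrow> mpoly_vars (\<Prod>i\<in>I. f i) \<subseteq> S"
proof (induction I rule: infinite_finite_induct)
  case (insert i F)
  have "mpoly_vars (f i * prod f F) \<subseteq> S"
    using vars_mult[of "f i" "prod f F"] insert by auto
  then show ?case using insert by simp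
qed (simp_all add: vars_one)

lemma vars_of_int: "mpoly_vars (of_int z) = {}"
proof -
  have "Poly_Mapping.keys (of_int z :: mpoly) \<subseteq> {0}"
    by (auto simp: in_keys_iff lookup_of_int when_def split: if_splits)
  then show ?thesis unfolding mpoly_vars_def by auto
qed

lemma vars_mvar: "mpoly_vars (mvar v) = {v}"
  unfolding mpoly_vars_def mvar_def by simp

lemma vars_det: assumes B: "\<And>a b. a < t \<Longrightarrow> b < t \<Longrightarrow> mpoly_vars (B a b) \<subseteq> S" shows "mpoly_vars (det_n t B) \<subseteq> S"
  unfolding det_n_def
proof (rule vars_sum)
  fix p assume "p \<in> {p. p permutes {..<t}}"
  then have pt: "\<And>a. a < t \<Longrightarrow> p a < t" using permutes_in_image by fastforce
  have "mpoly_vars (\<Prod>a<t. B a (p a)) \<subseteq> S"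
    by (rule vars_prod) (use pt B in auto)
  then show "mpoly_vars (of_int (sign p) * (\<Prod>a<t. B a (p a))) \<subseteq> S"
    using vars_mult[of "of_int (sign p)" "\<Prod>a<t. B a (p a)"] by (auto simp: vars_of_int)
qed

lemma ofr_ofb: "complex_of_real (of_bool b) = of_bool b" by (cases b) auto

lemma entry_eval:
  assumes j: "j < n2" and l: "l < n0"
  shows "mpoly_eval (comb_matrix k lam j l) (param_point k n0 n1 n2 A W1 W2)
    = (\<Sum>r<n1. complex_of_real (W2 j r) * of_int (\<Sum>i<k. lam i * of_bool (A i r)) * complex_of_real (W1 r l))"
proof -
  have "mpoly_eval (comb_matrix k lam j l) (param_point k n0 n1 n2 A W1 W2)
     = (\<Sum>i<k. of_int (lam i) * (\<Sum>r<n1. complex_of_real (W2 j r) * of_bool (A i r) * complex_of_real (W1 r l)))"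
    unfolding comb_matrix_def using j l
    by (simp add: eval_sum eval_mult eval_of_int eval_mvar param_point_def net_matrix_def ofr_ofb)
  also have "\<dots> = (\<Sum>i<k. \<Sum>r<n1. complex_of_real (W2 j r) * (of_int (lam i) * of_bool (A i r)) * complex_of_real (W1 r l))"
    by (simp add: sum_distrib_left mult_ac)
  also have "\<dots> = (\<Sum>r<n1. \<Sum>i<k. complex_of_real (W2 j r) * (of_int (lam i) * of_bool (A i r)) * complex_of_real (W1 r l))"
    by (rule sum.swap)
  also have "\<dots> = (\<Sum>r<n1. complex_of_real (W2 j r) * of_int (\<Sum>i<k. lam i * of_bool (A i r)) * complex_of_real (W1 r l))"
    by (intro sum.cong refl) (simp only: of_int_sum of_int_mult of_int_of_bool sum_distrib_left sum_distrib_right)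
  finally show ?thesis .
qed

theorem theorem7p1:
  fixes k n0 n1 n2 :: nat
    and A :: "nat \<Rightarrow> nat \<Rightarrow> bool"
    and lam :: "nat \<Rightarrow> int"
  shows "minors (card (supp_comb k n1 lam A) + 1) n2 n0 (comb_matrix k lam)
           \<subseteq> J_ideal k n0 n1 n2 A"
proof
  define S where "S = supp_comb k n1 lam A"
  define s where "s = card S"
  define t where "t = s + 1"
  define c where "c r = (\<Sum>i<k. lam i * of_bool (A i r))" for r
  have finS: "finite S" unfolding S_def supp_comb_def by auto
  have Sc: "\<And>r. r < n1 \<Longrightarrow> r \<notin> S \<Longrightarrow> c r = 0" unfolding S_def supp_comb_def c_def by auto
  have Ssub: "S \<subseteq> {..<n1}" unfolding S_def supp_comb_def by auto
  obtain e where e: "bij_betw e {0..<s} S" using ex_bij_betw_nat_finite[OF finS] s_def by blast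
  fix p assume "p \<in> minors (card (supp_comb k n1 lam A) + 1) n2 n0 (comb_matrix k lam)"
  then obtain rs cs where p: "p = det_n t (\<lambda>a b. comb_matrix k lam (rs a) (cs b))"
    and rc: "\<And>a. a < t \<Longrightarrow> rs a < n2 \<and> cs a < n0"
    unfolding minors_def t_def s_def S_def by blast
  have ring: "p \<in> poly_ring k n2 n0"
    unfolding poly_ring_def mem_Collect_eq p
  proof (rule vars_det)
    fix a b assume ab: "a < t" "b < t"
    show "mpoly_vars (comb_matrix k lam (rs a) (cs b)) \<subseteq> coord_set k n2 n0"
      unfolding comb_matrix_def
    proof (rule vars_sum)
      fix i assume "i \<in> {..<k}"
      then show "mpoly_vars (of_int (lam i) * mvar (i, rs a, cs b)) \<subseteq> coord_set k n2 n0"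
        using vars_mult[of "of_int (lam i)" "mvar (i, rs a, cs b)"] rc[OF ab(1)] rc[OF ab(2)]
        by (auto simp: vars_of_int vars_mvar coord_set_def)
    qed
  qed
  have vanish: "mpoly_eval p y = 0" if yin: "y \<in> {param_point k n0 n1 n2 A W1 W2 | W1 W2. True}" for y
  proof -
    obtain W1 W2 where y: "y = param_point k n0 n1 n2 A W1 W2" using yin by blast
    have "mpoly_eval p y = det_n t (\<lambda>a b. mpoly_eval (comb_matrix k lam (rs a) (cs b)) y)"
      unfolding p by (rule eval_det)
    also have "\<dots> = 0"
    proof (rule det_n_factor[where s = s and B = "\<lambda>a q. complex_of_real (W2 (rs a) (e q)) * of_int (c (e q))"
          and C = "\<lambda>q b. complex_of_real (W1 (e q) (cs b))"])
      show "s < t" unfolding t_def by simp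
      fix a b assume ab: "a < t" "b < t"
      have "mpoly_eval (comb_matrix k lam (rs a) (cs b)) y
          = (\<Sum>r<n1. complex_of_real (W2 (rs a) r) * of_int (c r) * complex_of_real (W1 r (cs b)))"
        unfolding y c_def using rc[OF ab(1)] rc[OF ab(2)] by (intro entry_eval) auto
      also have "\<dots> = (\<Sum>r\<in>S. complex_of_real (W2 (rs a) r) * of_int (c r) * complex_of_real (W1 r (cs b)))"
        by (rule sum.mono_neutral_right) (use Ssub Sc in auto)
      also have "\<dots> = (\<Sum>q\<in>{0..<s}. complex_of_real (W2 (rs a) (e q)) * of_int (c (e q)) * complex_of_real (W1 (e q) (cs b)))"
        by (rule sum.reindex_bij_betw[OF e, symmetric])
      finally show "mpoly_eval (comb_matrix k lam (rs a) (cs b)) y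
          = (\<Sum>q<s. complex_of_real (W2 (rs a) (e q)) * of_int (c (e q)) * complex_of_real (W1 (e q) (cs b)))"
        by (simp add: lessThan_atLeast0)
    qed
    finally show ?thesis .
  qed
  show "p \<in> J_ideal k n0 n1 n2 A"
    unfolding J_ideal_def vanishing_ideal_def
    using ring vanish by (auto simp: zariski_closure_def)
qed

end
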